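(* Let $G$ be a number all of whose options are numbers, and let $H$ be any game with $L(H)\neq\emptyset$. Then every Left option $G^L\in L(G)$ is strictly dominated in $G\mathbin{:}H$, i.e. there is a Left option $K$ of $G\mathbin{:}H$ with $G^L<K$.
   Context: Games are short normal-play combinatorial games, written $G\cong\{L(G)\mid R(G)\}$ with $L(G)$, $R(G)$ the Left and Right options; $<,\le,=$ denote the usual order and equality of game values. The ordinal sum is defined recursively by $G\mathbin{:}H\cong\{L(G),\,G\mathbin{:}L(H)\mid R(G),\,G\mathbin{:}R(H)\}$ (moving in $H$ keeps $G$; moving in $G$ discards $H$). A number is a game $G$ with $G^L<G<G^R$ for all $G^L\in L(G)$, $G^R\in R(G)$ (short numbers have values in the dyadic rationals). *)

theory Defs
  imports Main
begin

datatype game = Game "game list" "game list"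

fun lopts :: "game \<Rightarrow> game list" where "lopts (Game l r) = l"
fun ropts :: "game \<Rightarrow> game list" where "ropts (Game l r) = r"

definition L :: "game \<Rightarrow> game set" where "L g = set (lopts g)"
definition R :: "game \<Rightarrow> game set" where "R g = set (ropts g)"

lemma size_opt: "x \<in> set xs \<Longrightarrow> size x < Suc (size_list size xs + size_list size ys)"
  "x \<in> set ys \<Longrightarrow> size x < Suc (size_list size xs + size_list size ys)"
  by (auto dest: size_list_estimation'[of _ _ _ size, OF _ le_refl])

function game_le :: "game \<Rightarrow> game \<Rightarrow> bool" where
  "game_le (Game gl gr) (Game hl hr) =
     ((\<forall>x\<in>set gl. \<not> game_le (Game hl hr) x) \<and> (\<forall>y\<in>set hr. \<not> game_le y (Game gl gr)))"
  by pat_completeness auto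
termination
  by (relation "measure (\<lambda>(a,b). size a + size b)") (auto dest: size_opt)

definition game_lt :: "game \<Rightarrow> game \<Rightarrow> bool" where
  "game_lt g h \<longleftrightarrow> game_le g h \<and> \<not> game_le h g"

primrec ordsum :: "game \<Rightarrow> game \<Rightarrow> game" where
  "ordsum g (Game hl hr) = Game (lopts g @ map (ordsum g) hl) (ropts g @ map (ordsum g) hr)"

definition is_number :: "game \<Rightarrow> bool" where
  "is_number g \<longleftrightarrow> (\<forall>x\<in>L g. game_lt x g) \<and> (\<forall>y\<in>R g. game_lt g y)"

end

theory Submission
  imports Defs
begin

lemma le_iff: "game_le g h = ((\<forall>x\<in>L g. \<not> game_le h x) \<and> (\<forall>y\<in>R h. \<not> game_le y g))"
  by (cases g; cases h) (simp add: L_def R_def)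

lemma size_L: "x \<in> L g \<Longrightarrow> size x < size g"
  by (cases g) (auto simp: L_def dest: size_opt)

lemma size_R: "x \<in> R g \<Longrightarrow> size x < size g"
  by (cases g) (auto simp: L_def R_def dest: size_opt)

lemma le_refl_g: "game_le x x"
proof (induction x rule: measure_induct_rule[of size])
  case (less x)
  show ?case
  proof (subst le_iff, intro conjI ballI)
    fix y assume y: "y \<in> L x"
    have "game_le y y" using less size_L[OF y] by blast
    then show "\<not> game_le x y" using y by (subst le_iff) blast
  next
    fix y assume y: "y \<in> R x"
    have "game_le y y" using less size_R[OF y] by blast
    then show "\<not> game_le y x" using y by (subst le_iff) blast
  qed
qed

lemma le_trans_g: "game_le x y \<Longrightarrow> game_le y z \<Longrightarrow> game_le x z"
proof (induction "size x + size y + size z" arbitrary: x y z rule: less_induct)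
  case less
  show ?case
  proof (subst le_iff, intro conjI ballI notI)
    fix a assume a: "a \<in> L x" and h: "game_le z a"
    have "game_le y a" using less(1)[of y z a] less(3) h size_L[OF a] by simp
    then show False using less(2) a by (subst (asm) le_iff) blast
  next
    fix a assume a: "a \<in> R z" and h: "game_le a x"
    have "game_le a y" using less(1)[of a x y] less(2) h size_R[OF a] by simp
    then show False using less(3) a by (subst (asm) le_iff) blast
  qed
qed

lemma L_ordsum: "L (ordsum g h) = L g \<union> ordsum g ` L h"
  by (cases h) (simp add: L_def)

lemma R_ordsum: "R (ordsum g h) = R g \<union> ordsum g ` R h"
  by (cases h) (simp add: R_def)

lemma not_le_opt: "GL \<in> L G \<Longrightarrow> \<not> game_le (ordsum G X) GL"
  by (subst le_iff) (auto simp: L_ordsum intro: le_refl_g)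

theorem proposition2p6:
  fixes G H GL :: game
  assumes "is_number G"
    and "\<forall>X \<in> L G \<union> R G. is_number X"
    and "L H \<noteq> {}"
    and "GL \<in> L G"
  shows "\<exists>K \<in> L (ordsum G H). game_lt GL K"
proof -
  obtain HL where HL: "HL \<in> L H" using assms(3) by blast
  have GLn: "is_number GL" using assms(2,4) by blast
  have "game_le GL (ordsum G HL)"
  proof (subst le_iff, intro conjI ballI notI)
    fix a assume a: "a \<in> L GL" and h: "game_le (ordsum G HL) a"
    have "game_le a GL" using GLn a unfolding is_number_def game_lt_def by blast
    then have "\<not> game_le (ordsum G HL) a"
      using assms(4) by (subst le_iff) (auto simp: L_ordsum)
    then show False using h by blast
  next
    fix b assume b: "b \<in> R (ordsum G HL)" and h: "game_le b GL"
    show False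
    proof (cases "b \<in> R G")
      case True
      have "game_le GL G" using assms(1,4) unfolding is_number_def game_lt_def by blast
      moreover have "\<not> game_le b G" using assms(1) True unfolding is_number_def game_lt_def by blast
      ultimately show False using h le_trans_g by blast
    next
      case False
      then obtain X where "b = ordsum G X" using b by (auto simp: R_ordsum)
      then show False using h not_le_opt[OF assms(4)] by blast
    qed
  qed
  moreover have "\<not> game_le (ordsum G HL) GL" using not_le_opt[OF assms(4)] .
  ultimately show ?thesis using HL by (auto simp: L_ordsum game_lt_def)
qed

end
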